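(* Fix $\theta$ with $1<\theta<2$. Let $(A_j)_{j\ge 1}$ be the sequence of subsets of $[0,1]$ defined as follows: $A_1$ is a Cantor set in $[0,1]$ of Lebesgue measure $2^{-1}$, and for each $j\ge 1$, $$A_{j+1}=\bigcup\{(A_1)_I : I \text{ is a hole of a Cantor component of } A_j\}$$ (for $j=1$ the only Cantor component of $A_1$ is $A_1$ itself). Put $f_j=\theta^j\chi_{A_j}$. For each $k\in\mathbb{N}$ let $(n^k_j)_{j\ge1}$ be a strictly increasing sequence of natural numbers, such that the sets $\{n^k_j:j\in\mathbb{N}\}$, $k\in\mathbb{N}$, are pairwise disjoint, and put $g_k=\sum_{j} f_{n^k_j}$. Then each $g_k\in L^1([0,1])$, and the closure in $L^1([0,1])$ of $\mathrm{span}\{g_k:k\in\mathbb{N}\}$ is an infinite-dimensional closed subspace contained in $\mathcal{G}\cup\{0\}$. In particular, $\mathcal{G}$ is spaceable in $L^1([0,1])$.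
   Context: $m$ denotes Lebesgue measure. $\mathcal{G}$ is the set of Lebesgue integrable functions on $[0,1]$ (elements of $L^1([0,1])$) that are nowhere essentially bounded, i.e. not essentially bounded on any nondegenerate subinterval of $[0,1]$. A Cantor set in $[a,b]$ is a perfect, uncountable, nowhere dense subset of $[a,b]$ containing $a$ and $b$ (so of diameter $b-a$), obtained by removing from $[a,b]$ a countable union of pairwise disjoint open intervals; these open intervals (the connected components of $[a,b]\setminus A$) are called the holes of $A$. A nonvoid set $B\subset[a,b]$ is Cantor-built with Cantor components $A_j$ ($j\in\Gamma$) if $B=\bigcup_{j\in\Gamma}A_j$, each $A_j$ is a Cantor set in some subinterval $[c_j,d_j]\subset[a,b]$, and $m([c_j,d_j]\cap[c_k,d_k])=0$ for $j\ne k$. For $A\subset[0,1]$ and an interval $I=[a,b]\subset[0,1]$ (or the closure of an open interval $I=(a,b)$), $A_I=\{(b-a)x+a: x\in A\}$. A subset $S$ of a topological vector space $X$ is spaceable if $S\cup\{0\}$ contains a closed infinite-dimensional vector subspace of $X$. *)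

theory Defs
  imports "HOL-Analysis.Analysis"
begin

definition cantor_set :: "real set \<Rightarrow> real \<Rightarrow> real \<Rightarrow> bool" where
  "cantor_set A a b \<longleftrightarrow> a < b \<and> A \<subseteq> {a..b} \<and> a \<in> A \<and> b \<in> A \<and>
     closed A \<and> (\<forall>x\<in>A. x islimpt A) \<and> uncountable A \<and> interior (closure A) = {}"

definition holes :: "real set \<Rightarrow> real \<Rightarrow> real \<Rightarrow> real set set" where
  "holes A a b = components ({a..b} - A)"

definition rescale :: "real set \<Rightarrow> real \<Rightarrow> real \<Rightarrow> real set" where
  "rescale A a b = (\<lambda>x. (b - a) * x + a) ` A"

text \<open>Endpoints of the intervals carrying the Cantor components of A_(j+1):
  level 0 is [0,1] (component A_1 itself); each next level consists of the closures
  of the holes of the components (A_1)_[c,d] of the previous level.\<close>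
primrec comp_intervals :: "real set \<Rightarrow> nat \<Rightarrow> (real \<times> real) set" where
  "comp_intervals A1 0 = {(0, 1)}"
| "comp_intervals A1 (Suc j) =
     {(Inf I, Sup I) | I c d. (c, d) \<in> comp_intervals A1 j \<and> I \<in> holes (rescale A1 c d) c d}"

definition cantor_seq :: "real set \<Rightarrow> nat \<Rightarrow> real set" where
  "cantor_seq A1 j = (\<Union>(c, d) \<in> comp_intervals A1 (j - 1). rescale A1 c d)"

definition fseq :: "real \<Rightarrow> real set \<Rightarrow> nat \<Rightarrow> real \<Rightarrow> real" where
  "fseq \<theta> A1 j x = \<theta> ^ j * indicator (cantor_seq A1 j) x"

text \<open>g = sum_j f_(n j), pointwise (set to 0 where the series diverges, a null set).\<close>
definition gfun :: "real \<Rightarrow> real set \<Rightarrow> (nat \<Rightarrow> nat) \<Rightarrow> real \<Rightarrow> real" where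
  "gfun \<theta> A1 n x =
     (if summable (\<lambda>j. fseq \<theta> A1 (n j) x) then (\<Sum>j. fseq \<theta> A1 (n j) x) else 0)"

definition L1 :: "(real \<Rightarrow> real) set" where
  "L1 = {h. set_integrable lborel {0..1} h}"

definition L1dist :: "(real \<Rightarrow> real) \<Rightarrow> (real \<Rightarrow> real) \<Rightarrow> real" where
  "L1dist h k = (LINT x:{0..1}|lborel. \<bar>h x - k x\<bar>)"

definition fspan :: "(nat \<Rightarrow> real \<Rightarrow> real) \<Rightarrow> (real \<Rightarrow> real) set" where
  "fspan g = {s. \<exists>N c. s = (\<lambda>x. \<Sum>k<N. c k * g k x)}"

definition L1closure :: "(real \<Rightarrow> real) set \<Rightarrow> (real \<Rightarrow> real) set" where
  "L1closure S = {h \<in> L1. \<exists>s. (\<forall>i. s i \<in> S \<and> s i \<in> L1) \<and> (\<lambda>i. L1dist (s i) h) \<longlonglongrightarrow> 0}"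

definition L1zero :: "(real \<Rightarrow> real) \<Rightarrow> bool" where
  "L1zero h \<longleftrightarrow> (AE x in lborel. x \<in> {0..1} \<longrightarrow> h x = 0)"

definition ess_bounded_on :: "(real \<Rightarrow> real) \<Rightarrow> real \<Rightarrow> real \<Rightarrow> bool" where
  "ess_bounded_on h a b \<longleftrightarrow> (\<exists>M. AE x in lborel. x \<in> {a..b} \<longrightarrow> \<bar>h x\<bar> \<le> M)"

definition Gset :: "(real \<Rightarrow> real) set" where
  "Gset = {h \<in> L1. \<forall>a b. 0 \<le> a \<and> a < b \<and> b \<le> 1 \<longrightarrow> \<not> ess_bounded_on h a b}"

end

theory Submission
  imports Defs
begin



locale cset =
  fixes A1 :: "real set"
  assumes cs: "cantor_set A1 0 1" and meas: "measure lborel A1 = 1/2"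
begin

abbreviation C where "C c d \<equiv> rescale A1 c d"

lemma A1_props: "A1 \<subseteq> {0..1}" "0 \<in> A1" "1 \<in> A1" "closed A1" "\<And>x. x \<in> A1 \<Longrightarrow> x islimpt A1"
  "interior A1 = {}"
  using cs unfolding cantor_set_def by (auto simp: closure_closed)

lemma A1_sets: "A1 \<in> sets lborel"
  using A1_props(4) by (simp add: borel_closed)

lemma A1_emeasure: "emeasure lborel A1 = ennreal (1/2)"
proof -
  have "emeasure lborel A1 \<le> emeasure lborel {0..1::real}"
    using A1_props(1) by (intro emeasure_mono) auto
  then have "emeasure lborel A1 < \<infinity>" by (metis emeasure_lborel_Icc_eq ennreal_less_top le_less_trans infinity_ennreal_def)
  then have "emeasure lborel A1 = ennreal (measure lborel A1)"
    by (intro emeasure_eq_ennreal_measure) (simp add: less_top)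
  then show ?thesis using meas by (simp only:)
qed

lemma C_sub: "c < d \<Longrightarrow> C c d \<subseteq> {c..d}"
proof
  fix y assume cd: "c < d" and "y \<in> C c d"
  then obtain x where x: "x \<in> A1" "y = (d - c) * x + c" unfolding rescale_def by auto
  then have "0 \<le> x" "x \<le> 1" using A1_props(1) by auto
  then have "0 \<le> (d - c) * x" "(d - c) * x \<le> d - c" using cd by (auto simp: mult_left_le)
  then show "y \<in> {c..d}" using x by auto
qed

lemma C_ends: "c \<in> C c d" "d \<in> C c d"
  using A1_props(2,3) unfolding rescale_def by (force, force)

lemma C_closed: "closed (C c d)"
proof -
  have "compact A1" using A1_props(1,4) by (meson bounded_subset compact_eq_bounded_closed compact_Icc compact_imp_bounded)
  then have "compact (C c d)" unfolding rescale_def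
    by (intro compact_continuous_image continuous_intros)
  then show ?thesis by (rule compact_imp_closed)
qed

lemma C_sets: "C c d \<in> sets lborel"
  using C_closed by (simp add: borel_closed)

lemma C_measure: "c < d \<Longrightarrow> measure lborel (C c d) = (d - c) / 2"
proof -
  assume cd: "c < d"
  have "measure lebesgue ((\<lambda>x. (d - c) *\<^sub>R x + c) ` A1) = \<bar>d - c\<bar> ^ DIM(real) * measure lebesgue A1"
    by (rule measure_lebesgue_affine)
  moreover have "measure lebesgue A1 = measure lborel A1" using A1_sets by (simp add: measure_completion)
  moreover have "measure lebesgue (C c d) = measure lborel (C c d)" using C_sets by (simp add: measure_completion)
  ultimately show ?thesis using cd meas unfolding rescale_def by simp
qed

lemma C_emeasure: "c < d \<Longrightarrow> emeasure lborel (C c d) = ennreal ((d - c) / 2)"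
proof -
  assume cd: "c < d"
  have "emeasure lborel (C c d) \<le> emeasure lborel {c..d}"
    using C_sub[OF cd] by (intro emeasure_mono) auto
  then have "emeasure lborel (C c d) < \<infinity>" by (metis emeasure_lborel_Icc_eq ennreal_less_top le_less_trans infinity_ennreal_def)
  then have "emeasure lborel (C c d) = ennreal (measure lborel (C c d))"
    by (intro emeasure_eq_ennreal_measure) (simp add: less_top)
  then show ?thesis using C_measure[OF cd] by (simp only:)
qed

lemma C_limpt: "y \<in> C c d \<Longrightarrow> c < d \<Longrightarrow> y islimpt C c d"
proof -
  assume y: "y \<in> C c d" and cd: "c < d"
  then obtain s where s: "s \<in> A1" "y = (d - c) * s + c" unfolding rescale_def by auto
  have sl: "s islimpt A1" using A1_props(5) s(1) .
  show ?thesis unfolding islimpt_approachable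
  proof (intro allI impI)
    fix e :: real assume e: "0 < e"
    then have "0 < e / (d - c)" using cd by simp
    then obtain t where t: "t \<in> A1" "t \<noteq> s" "dist t s < e / (d - c)"
      using sl unfolding islimpt_approachable by blast
    have "(d - c) * t + c \<in> C c d" using t(1) unfolding rescale_def by auto
    moreover have "(d - c) * t + c \<noteq> y" using t(2) s(2) cd by auto
    moreover have "dist ((d - c) * t + c) y < e"
    proof -
      have "dist ((d - c) * t + c) y = (d - c) * dist t s" using s(2) cd
        by (simp add: dist_real_def abs_mult right_diff_distrib[symmetric])
      also have "\<dots> < (d - c) * (e / (d - c))" using t(3) cd by (intro mult_strict_left_mono) auto
      finally show ?thesis using cd by simp
    qed
    ultimately show "\<exists>x'\<in>C c d. x' \<noteq> y \<and> dist x' y < e" by blast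
  qed
qed

lemma C_nointerval: "c < d \<Longrightarrow> a < b \<Longrightarrow> \<not> {a<..<b} \<subseteq> C c d"
proof
  assume cd: "c < d" and ab: "a < b" and sub: "{a<..<b} \<subseteq> C c d"
  let ?f = "\<lambda>y. (y - c) / (d - c)"
  have "{?f a<..<?f b} \<subseteq> A1"
  proof
    fix t assume t: "t \<in> {?f a<..<?f b}"
    have "(d - c) * t + c \<in> {a<..<b}" using t cd
      by (auto simp: field_simps)
    then have "(d - c) * t + c \<in> C c d" using sub by auto
    then obtain s where "s \<in> A1" "(d - c) * t + c = (d - c) * s + c" unfolding rescale_def by auto
    then show "t \<in> A1" using cd by auto
  qed
  moreover have "?f a < ?f b" using cd ab by (simp add: divide_strict_right_mono)
  ultimately have "{?f a<..<?f b} \<subseteq> interior A1"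
    by (simp add: interior_maximal)
  then show False using A1_props(6) \<open>?f a < ?f b\<close> by auto
qed

end



lemma open_interval_eq:
  fixes I :: "real set"
  assumes "open I" "connected I" "I \<noteq> {}" "bdd_above I" "bdd_below I"
  shows "I = {Inf I<..<Sup I}"
proof
  show "I \<subseteq> {Inf I<..<Sup I}"
  proof
    fix x assume x: "x \<in> I"
    then obtain e where e: "e > 0" "ball x e \<subseteq> I" using assms(1) open_contains_ball by blast
    have "x - e/2 \<in> I" "x + e/2 \<in> I" using e by (auto simp: dist_real_def subset_iff)
    then have "Inf I \<le> x - e/2" "x + e/2 \<le> Sup I" using assms(4,5) by (auto intro: cInf_lower cSup_upper)
    then show "x \<in> {Inf I<..<Sup I}" using e by auto
  qed
next
  show "{Inf I<..<Sup I} \<subseteq> I"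
  proof
    fix y assume y: "y \<in> {Inf I<..<Sup I}"
    then obtain u where u: "u \<in> I" "u < y" using assms(3,5) by (auto simp: cInf_less_iff)
    obtain v where v: "v \<in> I" "y < v" using y assms(3,4) by (auto simp: less_cSup_iff)
    have "is_interval I" using assms(2) by (simp add: is_interval_connected_1)
    then show "y \<in> I" using u v unfolding is_interval_1 by (meson less_imp_le)
  qed
qed

context cset
begin

definition S where "S c d = {c..d} - C c d"

lemma S_open: "open (S c d)"
proof -
  have "S c d = {c<..<d} - C c d" unfolding S_def using C_ends(1)[of c d] C_ends(2)[of d c] by (auto simp: less_le)
  then show ?thesis using C_closed by (simp add: open_Diff)
qed

lemma hole_props:
  assumes cd: "c < d" and I: "I \<in> holes (C c d) c d"
  shows "I = {Inf I<..<Sup I}" "c \<le> Inf I" "Inf I < Sup I" "Sup I \<le> d" "I \<inter> C c d = {}"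
    "I \<subseteq> {c..d}"
proof -
  have Ic: "I \<in> components (S c d)" using I unfolding holes_def S_def .
  have sub: "I \<subseteq> S c d" using Ic by (rule in_components_subset)
  then show sub2: "I \<subseteq> {c..d}" "I \<inter> C c d = {}" unfolding S_def by auto
  have ne: "I \<noteq> {}" using Ic by (rule in_components_nonempty)
  have "open I" using Ic S_open open_components by blast
  moreover have "connected I" using Ic by (rule in_components_connected)
  moreover have "bdd_above I" "bdd_below I" using sub2 by (auto intro: bdd_above_mono bdd_below_mono)
  ultimately show eq: "I = {Inf I<..<Sup I}" using ne open_interval_eq by blast
  from ne obtain x where "x \<in> I" by auto
  then have "x \<in> {Inf I<..<Sup I}" by (subst (asm) eq)
  then show "Inf I < Sup I" by auto
  show "c \<le> Inf I" using ne sub2 by (intro cInf_greatest) auto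
  show "Sup I \<le> d" using ne sub2 by (intro cSup_least) auto
qed

lemma hole_countable: "countable (holes (C c d) c d)"
  unfolding holes_def
  apply (rule countable_disjoint_open_subsets)
  using S_open open_components unfolding S_def apply blast
  unfolding pairwise_def disjnt_def using components_nonoverlap by blast

lemma hole_disjoint: "I \<in> holes (C c d) c d \<Longrightarrow> I' \<in> holes (C c d) c d \<Longrightarrow> I \<noteq> I' \<Longrightarrow> I \<inter> I' = {}"
  unfolding holes_def using components_nonoverlap by blast

lemma hole_exists_at: "x \<in> {c..d} \<Longrightarrow> x \<notin> C c d \<Longrightarrow> \<exists>I\<in>holes (C c d) c d. x \<in> I"
proof -
  assume "x \<in> {c..d}" "x \<notin> C c d"
  then have x: "x \<in> S c d" unfolding S_def by auto
  have "connected_component_set (S c d) x \<in> components (S c d)" using x by (auto simp: components_iff)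
  moreover have "x \<in> connected_component_set (S c d) x" using x by simp
  ultimately show ?thesis unfolding holes_def S_def by blast
qed

lemma hole_exists: "c < d \<Longrightarrow> \<exists>I. I \<in> holes (C c d) c d"
proof -
  assume cd: "c < d"
  from C_nointerval[OF cd cd] obtain x where "x \<in> {c<..<d}" "x \<notin> C c d" by blast
  then show ?thesis using hole_exists_at[of x c d] by auto
qed

lemma hole_small:
  assumes cd: "c < d" and I: "I \<in> holes (C c d) c d"
  shows "Sup I - Inf I \<le> (d - c) / 2"
proof -
  note h = hole_props[OF cd I]
  have ms: "{c..d} - C c d \<in> sets lborel" using C_sets by (intro sets.Diff) auto
  have "emeasure lborel I \<le> emeasure lborel ({c..d} - C c d)"
    using h(5,6) ms by (intro emeasure_mono) auto
  also have "\<dots> = emeasure lborel {c..d} - emeasure lborel (C c d)"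
    using C_sub[OF cd] C_emeasure[OF cd] by (intro emeasure_Diff) (auto simp: C_sets[simplified])
  also have "\<dots> = ennreal ((d - c) / 2)"
    using C_emeasure[OF cd] cd by (simp, subst ennreal_minus) (auto simp: field_simps)
  finally have le: "emeasure lborel I \<le> ennreal ((d - c) / 2)" .
  have "emeasure lborel I = ennreal (Sup I - Inf I)" using h(3) by (subst h(1)) simp
  with le have "ennreal (Sup I - Inf I) \<le> ennreal ((d - c) / 2)" by simp
  then show ?thesis using cd by (simp add: ennreal_le_iff)
qed

lemma hole_geom:
  assumes cd: "c < d" and ab: "c \<le> a" "a < b" "b \<le> d"
  shows "(\<exists>I\<in>holes (C c d) c d. I \<subseteq> {a<..<b}) \<or> (\<exists>I\<in>holes (C c d) c d. {a<..<b} \<subseteq> I)"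
proof (cases "C c d \<inter> {a<..<b} = {}")
  case True
  have "(a+b)/2 \<in> {a<..<b}" using ab by auto
  then have x: "(a+b)/2 \<in> S c d" using True ab unfolding S_def by auto
  have "{a<..<b} \<subseteq> S c d" using True ab unfolding S_def by auto
  then have "{a<..<b} \<subseteq> connected_component_set (S c d) ((a+b)/2)"
    using \<open>(a+b)/2 \<in> {a<..<b}\<close> by (intro connected_component_maximal) auto
  moreover have "connected_component_set (S c d) ((a+b)/2) \<in> components (S c d)" using x by (auto simp: components_iff)
  ultimately show ?thesis unfolding holes_def S_def by blast
next
  case False
  then obtain y where y: "y \<in> C c d" "a < y" "y < b" by auto
  have "y islimpt C c d" using C_limpt[OF y(1) cd] .
  moreover have "min (y - a) (b - y) > 0" using y by auto
  ultimately obtain z where z: "z \<in> C c d" "z \<noteq> y" "dist z y < min (y - a) (b - y)"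
    unfolding islimpt_approachable by blast
  then have za: "a < z" "z < b" by (auto simp: dist_real_def)
  define y1 where "y1 = min y z"
  define z1 where "z1 = max y z"
  have y1z1: "y1 < z1" "y1 \<in> C c d" "z1 \<in> C c d" "a < y1" "z1 < b"
    using z y za unfolding y1_def z1_def by (auto simp: min_def max_def)
  from C_nointerval[OF cd y1z1(1)] obtain x where x: "x \<in> {y1<..<z1}" "x \<notin> C c d" by blast
  then have "x \<in> {c..d}" using y1z1 ab by auto
  then obtain I where I: "I \<in> holes (C c d) c d" "x \<in> I" using hole_exists_at x by blast
  note h = hole_props[OF cd I(1)]
  from I(2) have xI: "x \<in> {Inf I<..<Sup I}" by (subst (asm) h(1))
  have "y1 \<le> Inf I"
  proof (rule ccontr)
    assume "\<not> y1 \<le> Inf I"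
    then have "y1 \<in> {Inf I<..<Sup I}" using x xI by auto
    then have "y1 \<in> I" by (subst h(1))
    then show False using h(5) y1z1(2) by auto
  qed
  moreover have "Sup I \<le> z1"
  proof (rule ccontr)
    assume "\<not> Sup I \<le> z1"
    then have "z1 \<in> {Inf I<..<Sup I}" using x xI by auto
    then have "z1 \<in> I" by (subst h(1))
    then show False using h(5) y1z1(3) by auto
  qed
  ultimately have "I \<subseteq> {a<..<b}" using y1z1 by (subst h(1)) auto
  then show ?thesis using I by blast
qed

end



context cset
begin

abbreviation P where "P j \<equiv> comp_intervals A1 j"

lemma P_Suc_iff: "(c', d') \<in> P (Suc j) \<longleftrightarrow>
   (\<exists>c d I. (c, d) \<in> P j \<and> I \<in> holes (C c d) c d \<and> c' = Inf I \<and> d' = Sup I)"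
  by auto

lemma P_props: "(c, d) \<in> P j \<Longrightarrow> 0 \<le> c \<and> c < d \<and> d \<le> 1 \<and> d - c \<le> (1/2)^j"
proof (induction j arbitrary: c d)
  case 0 then show ?case by simp
next
  case (Suc j)
  then obtain c0 d0 I where I: "(c0, d0) \<in> P j" "I \<in> holes (C c0 d0) c0 d0" "c = Inf I" "d = Sup I"
    using P_Suc_iff by blast
  have ih: "0 \<le> c0 \<and> c0 < d0 \<and> d0 \<le> 1 \<and> d0 - c0 \<le> (1/2)^j" using Suc.IH I(1) .
  then have cd0: "c0 < d0" by auto
  note h = hole_props[OF cd0 I(2)]
  have "Sup I - Inf I \<le> (d0 - c0) / 2" using hole_small[OF cd0 I(2)] .
  then show ?case using ih h I(3,4) by auto
qed

lemma P_countable: "countable (P j)"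
proof (induction j)
  case 0 then show ?case by simp
next
  case (Suc j)
  have "P (Suc j) = (\<Union>p\<in>P j. (\<lambda>I. (Inf I, Sup I)) ` holes (C (fst p) (snd p)) (fst p) (snd p))"
    by force
  then show ?case using Suc.IH hole_countable by (simp add: countable_UN)
qed

lemma hole_in_open: "c < d \<Longrightarrow> I \<in> holes (C c d) c d \<Longrightarrow> {Inf I<..<Sup I} \<subseteq> {c<..<d}"
  using hole_props(2,4)[of c d I] by auto

lemma P_disj: "(c, d) \<in> P j \<Longrightarrow> (c', d') \<in> P j \<Longrightarrow> (c, d) \<noteq> (c', d') \<Longrightarrow>
  {c<..<d} \<inter> {c'<..<d'} = {}"
proof (induction j arbitrary: c d c' d')
  case 0 then show ?case by simp
next
  case (Suc j)
  obtain c0 d0 I where I: "(c0, d0) \<in> P j" "I \<in> holes (C c0 d0) c0 d0" "c = Inf I" "d = Sup I"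
    using Suc.prems(1) P_Suc_iff by blast
  obtain c1 d1 I' where I': "(c1, d1) \<in> P j" "I' \<in> holes (C c1 d1) c1 d1" "c' = Inf I'" "d' = Sup I'"
    using Suc.prems(2) P_Suc_iff by blast
  have cd0: "c0 < d0" using P_props[OF I(1)] by auto
  have cd1: "c1 < d1" using P_props[OF I'(1)] by auto
  have e1: "{c<..<d} = I" using hole_props(1)[OF cd0 I(2)] I(3,4) by simp
  have e2: "{c'<..<d'} = I'" using hole_props(1)[OF cd1 I'(2)] I'(3,4) by simp
  show ?case
  proof (cases "(c0, d0) = (c1, d1)")
    case True
    then have "I \<noteq> I'" using Suc.prems(3) I(3,4) I'(3,4) by auto
    then show ?thesis using hole_disjoint I(2) I'(2) True e1 e2 by auto
  next
    case False
    have "{c0<..<d0} \<inter> {c1<..<d1} = {}" using Suc.IH[OF I(1) I'(1) False] .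
    moreover have "{c<..<d} \<subseteq> {c0<..<d0}" using hole_in_open[OF cd0 I(2)] I(3,4) by simp
    moreover have "{c'<..<d'} \<subseteq> {c1<..<d1}" using hole_in_open[OF cd1 I'(2)] I'(3,4) by simp
    ultimately show ?thesis by blast
  qed
qed

lemma P_child: "(c, d) \<in> P j \<Longrightarrow> \<exists>c' d'. (c', d') \<in> P (Suc j) \<and> c \<le> c' \<and> d' \<le> d"
proof -
  assume p: "(c, d) \<in> P j"
  then have cd: "c < d" using P_props by blast
  obtain I where I: "I \<in> holes (C c d) c d" using hole_exists[OF cd] by blast
  have "(Inf I, Sup I) \<in> P (Suc j)" using p I P_Suc_iff by blast
  then show ?thesis using hole_props[OF cd I] by blast
qed

lemma P_desc: "(c, d) \<in> P j \<Longrightarrow> \<exists>c' d'. (c', d') \<in> P (j + k) \<and> c \<le> c' \<and> d' \<le> d"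
proof (induction k)
  case 0 then show ?case by auto
next
  case (Suc k)
  then obtain c' d' where cd': "(c', d') \<in> P (j + k)" "c \<le> c'" "d' \<le> d" by blast
  obtain c'' d'' where "(c'', d'') \<in> P (Suc (j + k))" "c' \<le> c''" "d'' \<le> d'" using P_child[OF cd'(1)] by blast
  then show ?case using cd' by (intro exI[of _ c''] exI[of _ d'']) auto
qed

lemma P_fit:
  assumes ab: "0 \<le> a" "a < b" "b \<le> 1"
  shows "\<exists>j c d. (c, d) \<in> P j \<and> a \<le> c \<and> d \<le> b"
proof (rule ccontr)
  assume nf: "\<not> ?thesis"
  have "\<exists>c d. (c, d) \<in> P l \<and> c \<le> a \<and> b \<le> d" for l
  proof (induction l)
    case 0 then show ?case using ab by auto
  next
    case (Suc l)
    then obtain c d where cd: "(c, d) \<in> P l" "c \<le> a" "b \<le> d" by blast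
    have cd0: "c < d" using P_props[OF cd(1)] by auto
    show ?case
    proof (cases "\<exists>I\<in>holes (C c d) c d. I \<subseteq> {a<..<b}")
      case True
      then obtain I where I: "I \<in> holes (C c d) c d" "I \<subseteq> {a<..<b}" by blast
      have "(Inf I, Sup I) \<in> P (Suc l)" using cd(1) I(1) P_Suc_iff by blast
      moreover have "{Inf I<..<Sup I} \<subseteq> {a<..<b}" "Inf I < Sup I" using hole_props(1,3)[OF cd0 I(1)] I(2) by auto
      then have "a \<le> Inf I" "Sup I \<le> b" using greaterThanLessThan_subseteq_greaterThanLessThan by blast+
      ultimately show ?thesis using nf by blast
    next
      case False
      then obtain I where I: "I \<in> holes (C c d) c d" "{a<..<b} \<subseteq> I"
        using hole_geom[OF cd0 cd(2) ab(2) cd(3)] by blast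
      have "(Inf I, Sup I) \<in> P (Suc l)" using cd(1) I(1) P_Suc_iff by blast
      moreover have "{a<..<b} \<subseteq> {Inf I<..<Sup I}" using hole_props(1)[OF cd0 I(1)] I(2) by auto
      then have "Inf I \<le> a" "b \<le> Sup I" using greaterThanLessThan_subseteq_greaterThanLessThan ab(2) by blast+
      ultimately show ?thesis by blast
    qed
  qed
  moreover obtain l where l: "(1/2::real)^l < b - a" using real_arch_pow_inv[of "b - a" "1/2"] ab by auto
  ultimately obtain c d where "(c, d) \<in> P l" "c \<le> a" "b \<le> d" by blast
  then have "b - a \<le> (1/2)^l" using P_props by fastforce
  then show False using l by simp
qed

end



context cset
begin

definition T where "T j = (\<Union>(c, d)\<in>P j. {c..d})"
abbreviation A where "A m \<equiv> cantor_seq A1 m"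
definition Ej where "Ej j = fst ` P j \<union> snd ` P j"
definition E where "E = (\<Union>j. Ej j)"

lemma Ej_countable: "countable (Ej j)"
  unfolding Ej_def using P_countable by auto

lemma E_countable: "countable E"
  unfolding E_def using Ej_countable by auto

lemma E_null: "E \<in> null_sets lborel"
  using E_countable by (rule countable_imp_null_set_lborel)

lemma Ej_null: "Ej j \<in> null_sets lborel"
  using Ej_countable by (rule countable_imp_null_set_lborel)

lemma A_Suc: "A (Suc j) = (\<Union>(c, d)\<in>P j. C c d)"
  unfolding cantor_seq_def by simp

lemma T_sets: "T j \<in> sets lborel"
  unfolding T_def using P_countable by (intro sets.countable_UN'') auto

lemma A_sets: "A m \<in> sets lborel"
  unfolding cantor_seq_def using P_countable C_sets by (intro sets.countable_UN'') auto

lemma half_e: "ennreal (x / 2) = ennreal x * inverse 2"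
proof (cases "0 \<le> x")
  case True then show ?thesis using ennreal_mult[of x "1/2"] by simp
next
  case False then show ?thesis by (simp add: ennreal_neg)
qed

lemma open_disj_point:
  fixes c d c0 d0 x :: real
  assumes "{c<..<d} \<inter> {c0<..<d0} = {}" "c < d" "c \<le> x" "x \<le> d" "c0 < x" "x < d0"
  shows False
proof -
  have "max c c0 < min d d0" using assms(2-6) by auto
  then have "(max c c0 + min d d0) / 2 \<in> {c<..<d} \<inter> {c0<..<d0}" by auto
  then show False using assms(1) by blast
qed

lemma UN_measure:
  assumes F1: "\<And>p. p \<in> P j \<Longrightarrow> F p \<subseteq> {fst p..snd p}"
    and F2: "\<And>p. p \<in> P j \<Longrightarrow> F p \<in> sets lborel"
  shows "emeasure lborel (\<Union>p\<in>P j. F p) = (\<integral>\<^sup>+p. emeasure lborel (F p) \<partial>count_space (P j))"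
proof -
  let ?N = "Ej j"
  have U: "(\<Union>p\<in>P j. F p) \<in> sets lborel" using P_countable F2 by (intro sets.countable_UN'') auto
  have "emeasure lborel (\<Union>p\<in>P j. F p) = emeasure lborel ((\<Union>p\<in>P j. F p) - ?N)"
    using U Ej_null by (simp add: emeasure_Diff_null_set)
  also have "(\<Union>p\<in>P j. F p) - ?N = (\<Union>p\<in>P j. F p - ?N)" by auto
  also have "emeasure lborel \<dots> = (\<integral>\<^sup>+p. emeasure lborel (F p - ?N) \<partial>count_space (P j))"
  proof (rule emeasure_UN_countable)
    show "\<And>p. p \<in> P j \<Longrightarrow> F p - ?N \<in> sets lborel" by (intro sets.Diff[OF F2 null_setsD2[OF Ej_null]])
    show "countable (P j)" by (rule P_countable)
    show "disjoint_family_on (\<lambda>p. F p - ?N) (P j)"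
    proof (unfold disjoint_family_on_def, intro ballI impI)
      fix p q assume p: "p \<in> P j" and q: "q \<in> P j" and pq: "p \<noteq> q"
      obtain c d where pcd: "p = (c, d)" by (cases p)
      obtain c' d' where qcd: "q = (c', d')" by (cases q)
      have sub: "F r - ?N \<subseteq> {fst r<..<snd r}" if r: "r \<in> P j" for r
      proof
        fix x assume x: "x \<in> F r - ?N"
        have "fst r \<in> ?N" "snd r \<in> ?N" using r unfolding Ej_def by auto
        moreover have "fst r \<le> x" "x \<le> snd r" using x F1[OF r] by auto
        ultimately show "x \<in> {fst r<..<snd r}" using x by (auto simp: order.order_iff_strict)
      qed
      have "F p - ?N \<subseteq> {c<..<d}" using sub[OF p] unfolding pcd by simp
      moreover have "F q - ?N \<subseteq> {c'<..<d'}" using sub[OF q] unfolding qcd by simp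
      moreover have "{c<..<d} \<inter> {c'<..<d'} = {}" using P_disj p q pq unfolding pcd qcd by blast
      ultimately show "(F p - ?N) \<inter> (F q - ?N) = {}" by blast
    qed
  qed
  also have "\<dots> = (\<integral>\<^sup>+p. emeasure lborel (F p) \<partial>count_space (P j))"
    using F2 Ej_null by (intro nn_integral_cong) (simp add: emeasure_Diff_null_set)
  finally show ?thesis .
qed

lemma T_measure_sum: "emeasure lborel (T j) = (\<integral>\<^sup>+p. ennreal (snd p - fst p) \<partial>count_space (P j))"
proof -
  have "emeasure lborel (T j) = emeasure lborel (\<Union>p\<in>P j. {fst p..snd p})"
    unfolding T_def case_prod_unfold ..
  also have "\<dots> = (\<integral>\<^sup>+p. emeasure lborel {fst p..snd p} \<partial>count_space (P j))"
    by (rule UN_measure) simp_all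
  also have "\<dots> = (\<integral>\<^sup>+p. ennreal (snd p - fst p) \<partial>count_space (P j))"
  proof (intro nn_integral_cong)
    fix p assume "p \<in> space (count_space (P j))"
    then have "fst p < snd p" using P_props[of "fst p" "snd p" j] by simp
    then show "emeasure lborel {fst p..snd p} = ennreal (snd p - fst p)" by simp
  qed
  finally show ?thesis .
qed

lemma A_measure_sum: "emeasure lborel (A (Suc j)) = (\<integral>\<^sup>+p. ennreal (snd p - fst p) * inverse 2 \<partial>count_space (P j))"
proof -
  have "emeasure lborel (A (Suc j)) = emeasure lborel (\<Union>p\<in>P j. C (fst p) (snd p))"
    unfolding A_Suc case_prod_unfold ..
  also have "\<dots> = (\<integral>\<^sup>+p. emeasure lborel (C (fst p) (snd p)) \<partial>count_space (P j))"
  proof (rule UN_measure)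
    fix p assume "p \<in> P j"
    then have "fst p < snd p" using P_props[of "fst p" "snd p" j] by simp
    then show "C (fst p) (snd p) \<subseteq> {fst p..snd p}" by (rule C_sub)
  qed (rule C_sets)
  also have "\<dots> = (\<integral>\<^sup>+p. ennreal (snd p - fst p) * inverse 2 \<partial>count_space (P j))"
  proof (intro nn_integral_cong)
    fix p assume "p \<in> space (count_space (P j))"
    then have "fst p < snd p" using P_props[of "fst p" "snd p" j] by simp
    then show "emeasure lborel (C (fst p) (snd p)) = ennreal (snd p - fst p) * inverse 2"
      by (simp only: C_emeasure half_e)
  qed
  finally show ?thesis .
qed

lemma A_half_T: "emeasure lborel (A (Suc j)) = emeasure lborel (T j) * inverse 2"
  unfolding A_measure_sum T_measure_sum by (rule nn_integral_multc) simp

lemma A_sub_T: "A (Suc j) \<subseteq> T j"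
proof
  fix x assume "x \<in> A (Suc j)"
  then obtain c d where cd: "(c, d) \<in> P j" "x \<in> C c d" unfolding A_Suc by auto
  have "c < d" using P_props[OF cd(1)] by simp
  then have "x \<in> {c..d}" using C_sub cd(2) by blast
  then show "x \<in> T j" unfolding T_def using cd(1) by blast
qed

lemma T_Suc_sub: "T (Suc j) \<subseteq> T j"
proof
  fix x assume "x \<in> T (Suc j)"
  then obtain c' d' where cd': "(c', d') \<in> P (Suc j)" "x \<in> {c'..d'}" unfolding T_def by (auto simp del: comp_intervals.simps)
  then obtain c d I where I: "(c, d) \<in> P j" "I \<in> holes (C c d) c d" "c' = Inf I" "d' = Sup I"
    using P_Suc_iff by blast
  have "c < d" using P_props[OF I(1)] by simp
  then have "c \<le> c'" "d' \<le> d" using hole_props[OF _ I(2)] I(3,4) by auto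
  show "x \<in> T j" unfolding T_def by (rule UN_I[OF I(1)]) (use cd'(2) \<open>c \<le> c'\<close> \<open>d' \<le> d\<close> in auto)
qed

lemma T_mono: "j \<le> j' \<Longrightarrow> T j' \<subseteq> T j"
  by (induction rule: dec_induct) (use T_Suc_sub in blast)+

lemma T_split: "T j \<subseteq> A (Suc j) \<union> T (Suc j)"
proof
  fix x assume "x \<in> T j"
  then obtain c d where cd: "(c, d) \<in> P j" "x \<in> {c..d}" unfolding T_def by auto
  show "x \<in> A (Suc j) \<union> T (Suc j)"
  proof (cases "x \<in> C c d")
    case True then show ?thesis using cd unfolding A_Suc by auto
  next
    case False
    then obtain I where I: "I \<in> holes (C c d) c d" "x \<in> I" using hole_exists_at cd(2) by blast
    have cd0: "c < d" using P_props[OF cd(1)] by simp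
    have "x \<in> {Inf I<..<Sup I}" using I(2) by (subst (asm) hole_props(1)[OF cd0 I(1)])
    then have xx: "x \<in> {Inf I..Sup I}" by auto
    have pp: "(Inf I, Sup I) \<in> P (Suc j)" using cd(1) I(1) P_Suc_iff by blast
    have "x \<in> T (Suc j)" unfolding T_def by (rule UN_I[OF pp]) (use xx in simp)
    then show ?thesis by simp
  qed
qed

lemma A_T_Int: "A (Suc j) \<inter> T (Suc j) \<subseteq> Ej (Suc j)"
proof
  fix x assume x: "x \<in> A (Suc j) \<inter> T (Suc j)"
  then obtain c d where cd: "(c, d) \<in> P j" "x \<in> C c d" unfolding A_Suc by auto
  obtain c' d' where cd': "(c', d') \<in> P (Suc j)" "x \<in> {c'..d'}" using x unfolding T_def by (auto simp del: comp_intervals.simps)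
  show "x \<in> Ej (Suc j)"
  proof (rule ccontr)
    assume "x \<notin> Ej (Suc j)"
    then have xo: "c' < x" "x < d'" using cd' unfolding Ej_def by (force simp: less_le)+
    obtain c0 d0 I where I: "(c0, d0) \<in> P j" "I \<in> holes (C c0 d0) c0 d0" "c' = Inf I" "d' = Sup I"
      using cd'(1) P_Suc_iff by blast
    have cd0: "c0 < d0" using P_props[OF I(1)] by simp
    have cdl: "c < d" using P_props[OF cd(1)] by simp
    have "x \<in> {Inf I<..<Sup I}" using xo I(3,4) by simp
    then have xI: "x \<in> I" by (subst hole_props(1)[OF cd0 I(2)])
    show False
    proof (cases "(c, d) = (c0, d0)")
      case True
      then show False using hole_props(5)[OF cd0 I(2)] xI cd(2) by auto
    next
      case False
      have "{c<..<d} \<inter> {c0<..<d0} = {}" using P_disj[OF cd(1) I(1) False] .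
      moreover have "x \<in> {c0<..<d0}" using hole_in_open[OF cd0 I(2)] xo I(3,4) by auto
      moreover have "x \<in> {c..d}" using C_sub[OF cdl] cd(2) by auto
      ultimately show False using open_disj_point cdl by auto
    qed
  qed
qed

lemma T_measure: "emeasure lborel (T j) = ennreal ((1/2)^j)"
proof (induction j)
  case 0
  have "T 0 = {0..1}" unfolding T_def by simp
  then show ?case by simp
next
  case (Suc j)
  have nul: "A (Suc j) \<inter> T (Suc j) \<in> null_sets lborel"
    by (rule null_sets_subset[OF Ej_null sets.Int[OF A_sets T_sets] A_T_Int])
  have "T j = A (Suc j) \<union> T (Suc j)" using T_split A_sub_T T_Suc_sub by blast
  then have "emeasure lborel (T j) = emeasure lborel (A (Suc j)) + emeasure lborel (T (Suc j))"
    using nul A_sets T_sets by (simp add: emeasure_Un')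
  then have eq: "ennreal ((1/2)^j) = ennreal ((1/2)^j / 2) + emeasure lborel (T (Suc j))"
    using Suc.IH A_half_T by (simp only: half_e)
  then have "emeasure lborel (T (Suc j)) = ennreal ((1/2)^j) - ennreal ((1/2)^j / 2)"
    by (metis add.commute ennreal_add_diff_cancel_right ennreal_neq_top)
  also have "\<dots> = ennreal ((1/2)^Suc j)"
    by (subst ennreal_minus) auto
  finally show ?case .
qed

lemma A_emeasure: "1 \<le> m \<Longrightarrow> emeasure lborel (A m) = ennreal ((1/2)^m)"
proof -
  assume "1 \<le> m"
  then obtain j where m: "m = Suc j" by (cases m) auto
  show ?thesis unfolding m A_half_T T_measure by (simp only: half_e[symmetric]) simp
qed

lemma A_measure: "1 \<le> m \<Longrightarrow> measure lborel (A m) = (1/2)^m"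
  using A_emeasure by (simp add: measure_def)

lemma A_sub01: "A m \<subseteq> {0..1}"
proof -
  have "A m = A (Suc (m - 1))" unfolding cantor_seq_def by simp
  also have "\<dots> \<subseteq> T (m - 1)" by (rule A_sub_T)
  also have "\<dots> \<subseteq> T 0" by (rule T_mono) simp
  also have "T 0 = {0..1}" unfolding T_def by simp
  finally show ?thesis .
qed

lemma A_disj: "x \<notin> E \<Longrightarrow> x \<in> A m \<Longrightarrow> x \<in> A m' \<Longrightarrow> 1 \<le> m \<Longrightarrow> 1 \<le> m' \<Longrightarrow> m = m'"
proof -
  have key: "x \<notin> E \<Longrightarrow> x \<in> A (Suc j) \<Longrightarrow> x \<in> A (Suc j') \<Longrightarrow> j < j' \<Longrightarrow> False" for j j'
  proof -
    assume x: "x \<notin> E" "x \<in> A (Suc j)" "x \<in> A (Suc j')" "j < j'"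
    have "x \<in> T j'" using x(3) A_sub_T by blast
    then have "x \<in> T (Suc j)" using T_mono[of "Suc j" j'] x(4) by auto
    then have "x \<in> Ej (Suc j)" using A_T_Int x(2) by blast
    then show False using x(1) unfolding E_def by blast
  qed
  assume a: "x \<notin> E" "x \<in> A m" "x \<in> A m'" "1 \<le> m" "1 \<le> m'"
  obtain j where j: "m = Suc j" using a(4) by (cases m) auto
  obtain j' where j': "m' = Suc j'" using a(5) by (cases m') auto
  show "m = m'"
  proof (rule ccontr)
    assume "m \<noteq> m'"
    then have "j < j' \<or> j' < j" using j j' by auto
    then show False using key[of j j'] key[of j' j] a unfolding j j' by blast
  qed
qed

lemma cover: "x \<in> {0..1} \<Longrightarrow> x \<in> T l \<or> (\<exists>m. 1 \<le> m \<and> m \<le> l \<and> x \<in> A m)"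
proof (induction l)
  case 0 then show ?case unfolding T_def by simp
next
  case (Suc l)
  from Suc.IH[OF Suc.prems] show ?case
  proof
    assume "x \<in> T l"
    then have "x \<in> A (Suc l) \<or> x \<in> T (Suc l)" using T_split by blast
    then show ?case
    proof
      assume "x \<in> A (Suc l)" then show ?case by (intro disjI2 exI[of _ "Suc l"]) simp
    qed simp
  next
    assume "\<exists>m. 1 \<le> m \<and> m \<le> l \<and> x \<in> A m"
    then show ?case using le_SucI by blast
  qed
qed

lemma T_Inter_null: "(\<Inter>l. T l) \<in> null_sets lborel"
proof -
  have s: "(\<Inter>l. T l) \<in> sets lborel" using T_sets by auto
  have "emeasure lborel (\<Inter>l. T l) \<le> ennreal ((1/2)^l)" for l
    using emeasure_mono[of "\<Inter>l. T l" "T l" lborel] T_sets T_measure by auto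
  then have "emeasure lborel (\<Inter>l. T l) \<le> 0"
  proof -
    assume h: "\<And>l. emeasure lborel (\<Inter>l. T l) \<le> ennreal ((1/2)^l)"
    have "(\<lambda>l. ennreal ((1/2::real)^l)) \<longlonglongrightarrow> ennreal 0"
      by (intro tendsto_ennrealI LIMSEQ_power_zero) auto
    then show ?thesis using h by (intro LIMSEQ_le_const) (auto intro: always_eventually)
  qed
  then show ?thesis using s by (auto simp: null_sets_def)
qed

lemma A_pos:
  assumes ab: "0 \<le> a" "a < b" "b \<le> 1"
  shows "\<exists>L. \<forall>m\<ge>L. 0 < measure lborel (A m \<inter> {a..b})"
proof -
  obtain j c d where cd: "(c, d) \<in> P j" "a \<le> c" "d \<le> b" using P_fit[OF ab] by blast
  have "0 < measure lborel (A m \<inter> {a..b})" if m: "m \<ge> Suc j" for m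
  proof -
    obtain c' d' where cd': "(c', d') \<in> P (j + (m - 1 - j))" "c \<le> c'" "d' \<le> d"
      using P_desc[OF cd(1)] by blast
    have "j + (m - 1 - j) = m - 1" using m by simp
    then have p: "(c', d') \<in> P (m - 1)" using cd'(1) by simp
    have cdl: "c' < d'" using P_props[OF p] by simp
    have "C c' d' \<subseteq> A m \<inter> {a..b}"
      using p C_sub[OF cdl] cd cd' unfolding cantor_seq_def by force
    then have "emeasure lborel (C c' d') \<le> emeasure lborel (A m \<inter> {a..b})"
      using A_sets by (intro emeasure_mono) auto
    moreover have "emeasure lborel (A m \<inter> {a..b}) \<le> emeasure lborel {a..b}"
      using A_sets by (intro emeasure_mono) auto
    moreover have "emeasure lborel {a..b} \<noteq> top" using ab by simp
    ultimately have "emeasure lborel (A m \<inter> {a..b}) \<noteq> top" using neq_top_trans by blast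
    then have "emeasure lborel (A m \<inter> {a..b}) = ennreal (measure lborel (A m \<inter> {a..b}))"
      by (rule emeasure_eq_ennreal_measure)
    with \<open>emeasure lborel (C c' d') \<le> _\<close> have "ennreal ((d' - c') / 2) \<le> ennreal (measure lborel (A m \<inter> {a..b}))"
      using C_emeasure[OF cdl] by simp
    then have "(d' - c') / 2 \<le> measure lborel (A m \<inter> {a..b})"
      by (simp add: ennreal_le_iff)
    then show ?thesis using cdl by simp
  qed
  then show ?thesis by blast
qed

end



locale cdata = cset +
  fixes \<theta> :: real and n :: "nat \<Rightarrow> nat \<Rightarrow> nat"
  assumes th1: "1 < \<theta>" and th2: "\<theta> < 2"
    and nmono: "\<And>k. strict_mono (n k)"
    and n1: "\<And>k j. 1 \<le> n k j"
    and ndisj: "\<And>k k'. k \<noteq> k' \<Longrightarrow> range (n k) \<inter> range (n k') = {}"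
begin

definition g where "g k = gfun \<theta> A1 (n k)"

lemma A_ge1: "A m = A (max m 1)"
  unfolding cantor_seq_def by (simp add: max_def)

lemma series_eval:
  assumes x: "x \<notin> E" "x \<in> A m" "1 \<le> m"
  shows "(\<lambda>j. fseq \<theta> A1 (n k j) x) sums (if m \<in> range (n k) then \<theta>^m else 0)"
proof (cases "m \<in> range (n k)")
  case True
  then obtain j0 where j0: "n k j0 = m" by auto
  have inj: "inj (n k)" using nmono strict_mono_imp_inj_on by blast
  have "(\<lambda>j. fseq \<theta> A1 (n k j) x) = (\<lambda>j. if j = j0 then \<theta>^m else 0)"
  proof
    fix j
    show "fseq \<theta> A1 (n k j) x = (if j = j0 then \<theta>^m else 0)"
    proof (cases "j = j0")
      case True then show ?thesis using j0 x(2) by (simp add: fseq_def)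
    next
      case False
      then have "n k j \<noteq> m" using j0 inj by (auto dest: injD)
      then have "x \<notin> A (n k j)" using A_disj[OF x(1) _ x(2) n1 x(3)] by blast
      then show ?thesis using False by (simp add: fseq_def)
    qed
  qed
  then show ?thesis using True sums_single[of j0 "\<lambda>_. \<theta>^m"] by simp
next
  case False
  have "(\<lambda>j. fseq \<theta> A1 (n k j) x) = (\<lambda>j. 0)"
  proof
    fix j
    have "n k j \<noteq> m" using False by auto
    then have "x \<notin> A (n k j)" using A_disj[OF x(1) _ x(2) n1 x(3)] by blast
    then show "fseq \<theta> A1 (n k j) x = 0" by (simp add: fseq_def)
  qed
  then show ?thesis using False by simp
qed

lemma series_zero:
  assumes x: "\<And>m. 1 \<le> m \<Longrightarrow> x \<notin> A m"
  shows "(\<lambda>j. fseq \<theta> A1 (n k j) x) = (\<lambda>j. 0)"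
  using x n1 by (auto simp: fseq_def)

lemma g_eval:
  assumes x: "x \<notin> E" "x \<in> A m" "1 \<le> m"
  shows "g k x = (if m \<in> range (n k) then \<theta>^m else 0)"
  using series_eval[OF x, of k] unfolding g_def gfun_def by (simp add: sums_iff)

lemma g_eval0:
  assumes x: "\<And>m. 1 \<le> m \<Longrightarrow> x \<notin> A m"
  shows "g k x = 0"
  using series_zero[OF x, of k] unfolding g_def gfun_def by simp

lemma series_summable_AE:
  "x \<notin> E \<Longrightarrow> summable (\<lambda>j. fseq \<theta> A1 (n k j) x)"
proof -
  assume x: "x \<notin> E"
  show ?thesis
  proof (cases "\<exists>m. 1 \<le> m \<and> x \<in> A m")
    case True
    then obtain m where "1 \<le> m" "x \<in> A m" by blast
    then show ?thesis using series_eval x by (meson sums_summable)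
  next
    case False
    then show ?thesis using series_zero[of x k] by auto
  qed
qed

lemma fseq_meas: "fseq \<theta> A1 m \<in> borel_measurable lborel"
proof -
  note [measurable] = A_sets[of m]
  show ?thesis unfolding fseq_def by measurable
qed

lemma gfun_meas: "gfun \<theta> A1 nn \<in> borel_measurable lborel"
proof -
  note [measurable] = fseq_meas
  have "Measurable.pred lborel (\<lambda>x. Cauchy (\<lambda>N. \<Sum>i<N. fseq \<theta> A1 (nn i) x))" by measurable
  then have [measurable]: "Measurable.pred lborel (\<lambda>x. summable (\<lambda>i. fseq \<theta> A1 (nn i) x))"
    unfolding summable_iff_convergent Cauchy_convergent_iff .
  show ?thesis unfolding gfun_def by measurable
qed

lemma fseq_nonneg: "0 \<le> fseq \<theta> A1 m x"
  using th1 by (simp add: fseq_def)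

lemma g_integrable: "integrable lborel (g k)"
proof -
  let ?f = "\<lambda>j x. fseq \<theta> A1 (n k j) x"
  have fint: "integrable lborel (?f j)" for j
  proof -
    have "emeasure lborel (A (n k j)) < \<infinity>" using A_emeasure[OF n1] by simp
    then have "integrable lborel (indicator (A (n k j)) :: real \<Rightarrow> real)" using A_sets by simp
    then show ?thesis unfolding fseq_def by simp
  qed
  have intf: "(\<integral>x. norm (?f j x) \<partial>lborel) = (\<theta>/2)^(n k j)" for j
  proof -
    have "(\<lambda>x. norm (?f j x)) = (\<lambda>x. \<theta>^(n k j) * indicator (A (n k j)) x)"
      using th1 by (auto simp: fseq_def fun_eq_iff)
    then have "(\<integral>x. norm (?f j x) \<partial>lborel) = (\<integral>x. \<theta>^(n k j) * indicator (A (n k j)) x \<partial>lborel)"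
      by simp
    also have "\<dots> = \<theta>^(n k j) * measure lborel (A (n k j))" by simp
    also have "\<dots> = (\<theta>/2)^(n k j)" using A_measure[OF n1] by (simp add: power_divide)
    finally show ?thesis .
  qed
  have sumint: "summable (\<lambda>j. (\<integral>x. norm (?f j x) \<partial>lborel))"
  proof -
    have "summable (\<lambda>j. (\<theta>/2)^j)" using th1 th2 by (intro summable_geometric) simp
    moreover have "norm ((\<theta>/2)^(n k j)) \<le> (\<theta>/2)^j" for j
    proof -
      have "j \<le> n k j" using nmono seq_suble by blast
      then show ?thesis using th1 th2 by (simp add: power_decreasing)
    qed
    ultimately show ?thesis unfolding intf by (rule summable_comparison_test'[where N=0])
  qed
  have AEs: "AE x in lborel. summable (\<lambda>j. norm (?f j x))"
  proof -
    have "AE x in lborel. x \<notin> E" using E_null by (rule AE_not_in)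
    then show ?thesis
    proof (rule AE_mp, intro AE_I2 impI)
      fix x assume "x \<notin> E"
      then show "summable (\<lambda>j. norm (?f j x))" using series_summable_AE fseq_nonneg by simp
    qed
  qed
  have int: "integrable lborel (\<lambda>x. \<Sum>j. ?f j x)"
    by (rule integrable_suminf[OF fint AEs sumint])
  have ae: "AE x in lborel. (\<Sum>j. ?f j x) = g k x"
  proof -
    have "AE x in lborel. x \<notin> E" using E_null by (rule AE_not_in)
    then show ?thesis
    proof (rule AE_mp, intro AE_I2 impI)
      fix x assume "x \<notin> E"
      then show "(\<Sum>j. ?f j x) = g k x" using series_summable_AE unfolding g_def gfun_def by simp
    qed
  qed
  have m: "g k \<in> borel_measurable lborel" unfolding g_def by (rule gfun_meas)
  show ?thesis by (rule integrable_cong_AE_imp[OF int m ae])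
qed

lemma g_meas: "g k \<in> borel_measurable lborel"
  using g_integrable by (rule borel_measurable_integrable)

lemma integrable_L1: "integrable lborel f \<Longrightarrow> f \<in> L1"
  unfolding L1_def set_integrable_def by (intro CollectI integrable_mult_indicator) auto

lemma g_L1: "g k \<in> L1"
  using g_integrable by (rule integrable_L1)

lemma span_integrable: "integrable lborel (\<lambda>x. \<Sum>k<N. c k * g k x)"
  using g_integrable by auto

lemma span_eval:
  assumes x: "x \<notin> E" "x \<in> A m" "1 \<le> m" and mk: "m \<in> range (n k)"
  shows "(\<Sum>k'<N. c k' * g k' x) = (if k < N then c k else 0) * \<theta>^m"
proof -
  have "(\<Sum>k'<N. c k' * g k' x) = (\<Sum>k'<N. if k' = k then c k * \<theta>^m else 0)"
  proof (intro sum.cong refl)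
    fix k' assume "k' \<in> {..<N}"
    show "c k' * g k' x = (if k' = k then c k * \<theta>^m else 0)"
    proof (cases "k' = k")
      case True then show ?thesis using g_eval[OF x] mk by simp
    next
      case False
      then have "m \<notin> range (n k')" using ndisj[of k' k] mk by blast
      then show ?thesis using g_eval[OF x] False by simp
    qed
  qed
  also have "\<dots> = (if k < N then c k else 0) * \<theta>^m" by (simp add: sum.delta)
  finally show ?thesis .
qed

lemma span_eval0:
  assumes x: "x \<notin> E" "x \<in> A m" "1 \<le> m" and mk: "\<And>k. m \<notin> range (n k)"
  shows "(\<Sum>k'<N. c k' * g k' x) = 0"
  using g_eval[OF x] mk by simp

end



lemma L1_setint: "h \<in> L1 \<Longrightarrow> set_integrable lborel {0..1} h"
  unfolding L1_def by simp

lemma L1_absdiff: "h \<in> L1 \<Longrightarrow> k \<in> L1 \<Longrightarrow> set_integrable lborel {0..1::real} (\<lambda>x. \<bar>h x - k x\<bar>)"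
  by (intro set_integrable_abs set_integral_diff(1)) (auto simp: L1_def)

lemma L1_lin: "h \<in> L1 \<Longrightarrow> k \<in> L1 \<Longrightarrow> (\<lambda>x. h x + c * k x) \<in> L1"
  unfolding L1_def by (auto intro!: set_integral_add(1))

lemma L1dist_nonneg: "0 \<le> L1dist h k"
  unfolding L1dist_def set_lebesgue_integral_def by (intro integral_nonneg_AE) (auto simp: indicator_def)

lemma L1dist_mono:
  assumes "\<And>x. x \<in> {0..1} \<Longrightarrow> \<bar>a x - b x\<bar> \<le> F x"
    and "a \<in> L1" "b \<in> L1" "set_integrable lborel {0..1::real} F"
  shows "L1dist a b \<le> (LINT x:{0..1}|lborel. F x)"
  unfolding L1dist_def
  by (rule set_integral_mono[OF L1_absdiff[OF assms(2,3)] assms(4) assms(1)])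

lemma L1dist_tri:
  assumes "a \<in> L1" "b \<in> L1" "c \<in> L1"
  shows "L1dist a c \<le> L1dist a b + L1dist b c"
proof -
  have "L1dist a c \<le> (LINT x:{0..1}|lborel. \<bar>a x - b x\<bar> + \<bar>b x - c x\<bar>)"
    using assms by (intro L1dist_mono set_integral_add(1) L1_absdiff) auto
  also have "\<dots> = L1dist a b + L1dist b c"
    unfolding L1dist_def using assms by (intro set_integral_add(2) L1_absdiff)
  finally show ?thesis .
qed

lemma L1dist_lin:
  assumes "s \<in> L1" "t \<in> L1" "h1 \<in> L1" "h2 \<in> L1"
  shows "L1dist (\<lambda>x. s x + c * t x) (\<lambda>x. h1 x + c * h2 x) \<le> L1dist s h1 + \<bar>c\<bar> * L1dist t h2"
proof -
  have "L1dist (\<lambda>x. s x + c * t x) (\<lambda>x. h1 x + c * h2 x) \<le>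
        (LINT x:{0..1}|lborel. \<bar>s x - h1 x\<bar> + \<bar>c\<bar> * \<bar>t x - h2 x\<bar>)"
  proof (rule L1dist_mono)
    fix x :: real
    have "\<bar>s x + c * t x - (h1 x + c * h2 x)\<bar> = \<bar>(s x - h1 x) + c * (t x - h2 x)\<bar>" by (simp add: algebra_simps)
    also have "\<dots> \<le> \<bar>s x - h1 x\<bar> + \<bar>c\<bar> * \<bar>t x - h2 x\<bar>" by (simp add: abs_triangle_ineq[THEN order_trans] abs_mult[symmetric])
    finally show "\<bar>s x + c * t x - (h1 x + c * h2 x)\<bar> \<le> \<bar>s x - h1 x\<bar> + \<bar>c\<bar> * \<bar>t x - h2 x\<bar>" .
  qed (use assms L1_lin L1_absdiff in auto)
  also have "\<dots> = L1dist s h1 + \<bar>c\<bar> * L1dist t h2"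
    unfolding L1dist_def using assms
    by (subst set_integral_add(2)) (auto intro: L1_absdiff)
  finally show ?thesis .
qed

lemma sum_ext_coeff: "(\<Sum>k<(KK::nat). (if k < N then a k else 0) * G k) = (\<Sum>k<min KK N. a k * (G k :: real))"
proof (induction KK)
  case (Suc KK)
  show ?case
  proof (cases "Suc KK \<le> N")
    case True then show ?thesis using Suc by (simp add: min_def)
  next
    case False
    then have "min (Suc KK) N = N" "min KK N = N" by auto
    then show ?thesis using Suc False by simp
  qed
qed simp

lemma fspan_lin:
  assumes "s \<in> fspan G" "t \<in> fspan G"
  shows "(\<lambda>x. s x + c * t x) \<in> fspan G"
proof -
  obtain N a where s: "s = (\<lambda>x. \<Sum>k<N. a k * G k x)" using assms(1) unfolding fspan_def by blast
  obtain M b where t: "t = (\<lambda>x. \<Sum>k<M. b k * G k x)" using assms(2) unfolding fspan_def by blast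
  define K where "K = max N M"
  define e where "e k = (if k < N then a k else 0) + c * (if k < M then b k else 0)" for k
  have "(\<lambda>x. s x + c * t x) = (\<lambda>x. \<Sum>k<K. e k * G k x)"
  proof
    fix x
    have "(\<Sum>k<K. e k * G k x) = (\<Sum>k<K. (if k < N then a k else 0) * G k x) + c * (\<Sum>k<K. (if k < M then b k else 0) * G k x)"
      unfolding e_def by (simp add: sum.distrib sum_distrib_left algebra_simps)
    also have "\<dots> = s x + c * t x" unfolding s t sum_ext_coeff K_def by simp
    finally show "s x + c * t x = (\<Sum>k<K. e k * G k x)" by simp
  qed
  then show ?thesis unfolding fspan_def by blast
qed

lemma closure_lin:
  assumes h1: "h1 \<in> L1closure (fspan G)" and h2: "h2 \<in> L1closure (fspan G)"
  shows "(\<lambda>x. h1 x + c * h2 x) \<in> L1closure (fspan G)"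
proof -
  obtain s where s: "\<And>i. s i \<in> fspan G" "\<And>i. s i \<in> L1" "(\<lambda>i. L1dist (s i) h1) \<longlonglongrightarrow> 0" "h1 \<in> L1"
    using h1 unfolding L1closure_def by blast
  obtain t where t: "\<And>i. t i \<in> fspan G" "\<And>i. t i \<in> L1" "(\<lambda>i. L1dist (t i) h2) \<longlonglongrightarrow> 0" "h2 \<in> L1"
    using h2 unfolding L1closure_def by blast
  define u where "u i = (\<lambda>x. s i x + c * t i x)" for i
  have u1: "u i \<in> fspan G" "u i \<in> L1" for i unfolding u_def using s t by (auto intro: fspan_lin L1_lin)
  have "(\<lambda>i. L1dist (s i) h1 + \<bar>c\<bar> * L1dist (t i) h2) \<longlonglongrightarrow> 0 + \<bar>c\<bar> * 0"
    by (intro tendsto_intros s(3) t(3))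
  then have lim: "(\<lambda>i. L1dist (s i) h1 + \<bar>c\<bar> * L1dist (t i) h2) \<longlonglongrightarrow> 0" by simp
  have "(\<lambda>i. L1dist (u i) (\<lambda>x. h1 x + c * h2 x)) \<longlonglongrightarrow> 0"
  proof (rule real_tendsto_sandwich[OF _ _ tendsto_const lim])
    show "\<forall>\<^sub>F i in sequentially. 0 \<le> L1dist (u i) (\<lambda>x. h1 x + c * h2 x)" by (simp add: L1dist_nonneg)
    show "\<forall>\<^sub>F i in sequentially. L1dist (u i) (\<lambda>x. h1 x + c * h2 x) \<le> L1dist (s i) h1 + \<bar>c\<bar> * L1dist (t i) h2"
      unfolding u_def using s t by (intro always_eventually allI L1dist_lin) auto
  qed
  moreover have "(\<lambda>x. h1 x + c * h2 x) \<in> L1" using s(4) t(4) by (rule L1_lin)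
  ultimately show ?thesis using u1 unfolding L1closure_def by blast
qed

lemma closure_closed:
  assumes h: "h \<in> L1" and s: "\<And>i. s i \<in> L1closure (fspan G)" and lim: "(\<lambda>i. L1dist (s i) h) \<longlonglongrightarrow> 0"
  shows "h \<in> L1closure (fspan G)"
proof -
  have "\<exists>u. u \<in> fspan G \<and> u \<in> L1 \<and> L1dist u (s i) < 1 / real (Suc i)" for i
  proof -
    obtain v where v: "\<And>j. v j \<in> fspan G" "\<And>j. v j \<in> L1" "(\<lambda>j. L1dist (v j) (s i)) \<longlonglongrightarrow> 0"
      using s[of i] unfolding L1closure_def by blast
    have "0 < 1 / real (Suc i)" by simp
    from LIMSEQ_D[OF v(3) this] obtain no where "\<forall>j\<ge>no. norm (L1dist (v j) (s i) - 0) < 1 / real (Suc i)" by blast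
    then have "L1dist (v no) (s i) < 1 / real (Suc i)" using L1dist_nonneg[of "v no" "s i"] by auto
    then show ?thesis using v by blast
  qed
  then obtain u where u: "\<And>i. u i \<in> fspan G" "\<And>i. u i \<in> L1" "\<And>i. L1dist (u i) (s i) < 1 / real (Suc i)"
    by metis
  have sL: "s i \<in> L1" for i using s unfolding L1closure_def by blast
  have lim2: "(\<lambda>i. 1 / real (Suc i) + L1dist (s i) h) \<longlonglongrightarrow> 0"
    using tendsto_add[OF LIMSEQ_inverse_real_of_nat[unfolded inverse_eq_divide] lim] by (simp only: add_0_right)
  have "(\<lambda>i. L1dist (u i) h) \<longlonglongrightarrow> 0"
  proof (rule real_tendsto_sandwich[OF _ _ tendsto_const lim2])
    show "\<forall>\<^sub>F i in sequentially. 0 \<le> L1dist (u i) h" by (simp add: L1dist_nonneg)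
    show "\<forall>\<^sub>F i in sequentially. L1dist (u i) h \<le> 1 / real (Suc i) + L1dist (s i) h"
    proof (intro always_eventually allI)
      fix i
      have "L1dist (u i) h \<le> L1dist (u i) (s i) + L1dist (s i) h" using u(2) sL h by (rule L1dist_tri)
      then show "L1dist (u i) h \<le> 1 / real (Suc i) + L1dist (s i) h" using u(3)[of i] by simp
    qed
  qed
  then show ?thesis using h u unfolding L1closure_def by blast
qed




lemma setint_const: "B \<in> sets lborel \<Longrightarrow> emeasure lborel B < \<infinity> \<Longrightarrow> set_integrable lborel B (\<lambda>_. c::real)"
  unfolding set_integrable_def by (rule integrable_indicator)

lemma setint_sub_le:
  fixes F :: "real \<Rightarrow> real"
  assumes "set_integrable lborel {0..1} F" "B \<in> sets lborel" "B \<subseteq> {0..1}" "\<And>x. 0 \<le> F x"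
  shows "(LINT x:B|lborel. F x) \<le> (LINT x:{0..1}|lborel. F x)"
proof -
  have "set_integrable lborel B F" using assms(1-3) by (rule set_integrable_subset)
  then show ?thesis using assms(1) unfolding set_lebesgue_integral_def set_integrable_def
  proof (intro integral_mono)
    fix x
    show "indicator B x *\<^sub>R F x \<le> indicator {0..1} x *\<^sub>R F x"
      using assms(3) assms(4)[of x] by (auto simp: indicator_def)
  qed auto
qed

lemma dist_sub:
  "s \<in> L1 \<Longrightarrow> h \<in> L1 \<Longrightarrow> B \<in> sets lborel \<Longrightarrow> B \<subseteq> {0..1} \<Longrightarrow>
    (LINT x:B|lborel. \<bar>s x - h x\<bar>) \<le> L1dist s h"
  unfolding L1dist_def by (rule setint_sub_le[OF L1_absdiff]) auto

context cdata
begin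

lemma A_fin: "emeasure lborel (A m) < \<infinity>"
proof -
  have "emeasure lborel (A m) \<le> emeasure lborel {0..1::real}"
    using A_sub01 by (intro emeasure_mono) auto
  then show ?thesis by (simp add: le_less_trans)
qed

lemma setint_L1: "h \<in> L1 \<Longrightarrow> B \<in> sets lborel \<Longrightarrow> B \<subseteq> {0..1} \<Longrightarrow> set_integrable lborel B h"
  unfolding L1_def by (auto intro: set_integrable_subset)

lemma span_AE:
  assumes "1 \<le> m" "m \<in> range (n k)"
  shows "AE x in lborel. x \<in> A m \<longrightarrow> (\<Sum>k'<N. c k' * g k' x) = (if k < N then c k else 0) * \<theta>^m"
  using AE_not_in[OF E_null] by eventually_elim (use span_eval assms in auto)

lemma span_AE0:
  assumes "1 \<le> m" "\<And>k. m \<notin> range (n k)"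
  shows "AE x in lborel. x \<in> A m \<longrightarrow> (\<Sum>k'<N. c k' * g k' x) = 0"
  using AE_not_in[OF E_null] by eventually_elim (use span_eval0 assms in auto)

lemma lin_indep:
  assumes z: "L1zero (\<lambda>x. \<Sum>k<N. c k * g k x)" and k0: "k0 < N"
  shows "c k0 = 0"
proof (rule ccontr)
  assume ne: "c k0 \<noteq> 0"
  define m where "m = n k0 0"
  have m1: "1 \<le> m" unfolding m_def by (rule n1)
  have mr: "m \<in> range (n k0)" unfolding m_def by auto
  have "AE x in lborel. x \<notin> A m"
    using z[unfolded L1zero_def] span_AE[OF m1 mr, where N=N and c=c]
  proof eventually_elim
    case (elim x)
    show "x \<notin> A m"
    proof
      assume xA: "x \<in> A m"
      then have "x \<in> {0..1}" using A_sub01[of m] by blast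
      then have "c k0 * \<theta>^m = 0" using elim xA k0 by simp
      then show False using ne th1 by simp
    qed
  qed
  then have "emeasure lborel (A m) = 0"
    by (subst (asm) AE_iff_measurable[OF A_sets[of m], of "\<lambda>x. x \<notin> A m"]) auto
  then show False using A_emeasure[OF m1] by simp
qed

lemma zero_on_A:
  assumes hL: "h \<in> L1" and X0: "(LINT x:A m|lborel. \<bar>h x\<bar>) = 0"
  shows "AE x in lborel. x \<in> A m \<longrightarrow> h x = 0"
proof -
  have si: "set_integrable lborel (A m) (\<lambda>x. \<bar>h x\<bar>)"
    using setint_L1[OF hL A_sets A_sub01] by (rule set_integrable_abs)
  then have "integrable lborel (\<lambda>x. indicator (A m) x * \<bar>h x\<bar>)" unfolding set_integrable_def by simp
  moreover have "integral\<^sup>L lborel (\<lambda>x. indicator (A m) x * \<bar>h x\<bar>) = 0"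
    using X0 unfolding set_lebesgue_integral_def by simp
  ultimately have "AE x in lborel. indicator (A m) x * \<bar>h x\<bar> = 0"
    by (subst (asm) integral_nonneg_eq_0_iff_AE) auto
  then show ?thesis by eventually_elim (auto simp: indicator_def)
qed

end



context cdata
begin

lemma zero_level:
  assumes hL: "h \<in> L1"
    and s: "\<And>i. s i = (\<lambda>x. \<Sum>k<NN i. cc i k * g k x)"
    and lim: "(\<lambda>i. L1dist (s i) h) \<longlonglongrightarrow> 0"
    and ab: "0 \<le> a" "a < b" "b \<le> 1"
    and M: "AE x in lborel. x \<in> {a..b} \<longrightarrow> \<bar>h x\<bar> \<le> M"
    and m1: "1 \<le> m"
  shows "(LINT x:A m|lborel. \<bar>h x\<bar>) = 0"
proof -
  define \<delta> where "\<delta> i = L1dist (s i) h" for i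
  define X where "X = (LINT x:A m|lborel. \<bar>h x\<bar>)"
  have sL: "s i \<in> L1" for i unfolding s by (rule integrable_L1[OF span_integrable])
  have subI: "set_integrable lborel B (\<lambda>x. \<bar>s i x - h x\<bar>)" if "B \<in> sets lborel" "B \<subseteq> {0..1}" for B i
    using L1_absdiff[OF sL hL] that by (rule set_integrable_subset)
  have hA: "set_integrable lborel (A m) (\<lambda>x. \<bar>h x\<bar>)"
    using setint_L1[OF hL A_sets A_sub01] by (rule set_integrable_abs)
  have dle: "(LINT x:B|lborel. \<bar>s i x - h x\<bar>) \<le> \<delta> i" if "B \<in> sets lborel" "B \<subseteq> {0..1}" for B i
    unfolding \<delta>_def using sL hL that by (rule dist_sub)
  have X0: "0 \<le> X" unfolding X_def set_lebesgue_integral_def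
    by (intro integral_nonneg_AE) (auto simp: indicator_def)
  have lim\<delta>: "\<delta> \<longlonglongrightarrow> 0" unfolding \<delta>_def[abs_def] by (rule lim)
  show ?thesis
  proof (cases "\<exists>k. m \<in> range (n k)")
    case False
    have "X \<le> \<delta> i" for i
    proof -
      have "X \<le> (LINT x:A m|lborel. \<bar>s i x - h x\<bar>)" unfolding X_def
      proof (rule set_integral_mono_AE[OF hA subI[OF A_sets A_sub01]])
        have nr: "\<And>k. m \<notin> range (n k)" using False by blast
        show "AE x\<in>A m in lborel. \<bar>h x\<bar> \<le> \<bar>s i x - h x\<bar>"
          using span_AE0[OF m1 nr, where N="NN i" and c="cc i"]
          by eventually_elim (auto simp: s)
      qed
      also have "\<dots> \<le> \<delta> i" by (rule dle[OF A_sets A_sub01])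
      finally show ?thesis .
    qed
    then have "X \<le> 0" using lim\<delta> by (intro LIMSEQ_le_const[OF lim\<delta>]) auto
    then show ?thesis using X0 unfolding X_def by simp
  next
    case True
    then obtain k where mk: "m \<in> range (n k)" by blast
    define \<beta> where "\<beta> i = (if k < NN i then cc i k else 0)" for i
    have sAE: "AE x in lborel. x \<in> A m' \<longrightarrow> s i x = \<beta> i * \<theta>^m'" if "1 \<le> m'" "m' \<in> range (n k)" for i m'
      using span_AE[OF that, where N="NN i" and c="cc i"] unfolding s \<beta>_def .
    have \<mu>le: "measure lborel (A m) \<le> 1" using A_measure[OF m1] by (simp add: power_le_one)
    have F1: "X \<le> \<delta> i + \<bar>\<beta> i\<bar> * \<theta>^m" for i
    proof -
      have ci: "set_integrable lborel (A m) (\<lambda>_. \<bar>\<beta> i\<bar> * \<theta>^m)" using A_sets A_fin by (rule setint_const)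
      have fin: "emeasure lborel (A m) \<noteq> \<infinity>" using A_fin[of m] by simp
      have c1: "(LINT x:A m|lborel. \<bar>\<beta> i\<bar> * \<theta>^m) = measure lborel (A m) *\<^sub>R (\<bar>\<beta> i\<bar> * \<theta>^m)"
        by (rule set_integral_const[OF A_sets fin])
      have "X \<le> (LINT x:A m|lborel. \<bar>s i x - h x\<bar> + \<bar>\<beta> i\<bar> * \<theta>^m)" unfolding X_def
      proof (rule set_integral_mono_AE[OF hA set_integral_add(1)[OF subI[OF A_sets A_sub01] ci]])
        show "AE x\<in>A m in lborel. \<bar>h x\<bar> \<le> \<bar>s i x - h x\<bar> + \<bar>\<beta> i\<bar> * \<theta>^m"
          using sAE[OF m1 mk, of i]
        proof eventually_elim
          case (elim x)
          show ?case
          proof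
            assume "x \<in> A m"
            then have "s i x = \<beta> i * \<theta>^m" using elim by simp
            moreover have "\<bar>h x\<bar> \<le> \<bar>s i x - h x\<bar> + \<bar>s i x\<bar>" by linarith
            ultimately show "\<bar>h x\<bar> \<le> \<bar>s i x - h x\<bar> + \<bar>\<beta> i\<bar> * \<theta>^m" using th1 by (simp add: abs_mult)
          qed
        qed
      qed
      also have "\<dots> = (LINT x:A m|lborel. \<bar>s i x - h x\<bar>) + measure lborel (A m) * (\<bar>\<beta> i\<bar> * \<theta>^m)"
        unfolding set_integral_add(2)[OF subI[OF A_sets A_sub01] ci] c1 by simp
      also have "\<dots> \<le> \<delta> i + 1 * (\<bar>\<beta> i\<bar> * \<theta>^m)"
        using dle[OF A_sets[of m] A_sub01[of m], of i] \<mu>le th1 by (intro add_mono mult_right_mono) auto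
      finally show ?thesis by simp
    qed
    obtain L where L: "\<And>m'. m' \<ge> L \<Longrightarrow> 0 < measure lborel (A m' \<inter> {a..b})" using A_pos[OF ab] by blast
    have F3: "X \<le> \<theta>^m * M / \<theta>^(n k j)" if j: "j \<ge> L" for j
    proof -
      define m' where "m' = n k j"
      define A' where "A' = A m' \<inter> {a..b}"
      define \<mu> where "\<mu> = measure lborel A'"
      have m'1: "1 \<le> m'" unfolding m'_def by (rule n1)
      have m'r: "m' \<in> range (n k)" unfolding m'_def by simp
      have "j \<le> m'" unfolding m'_def using nmono seq_suble by blast
      then have \<mu>pos: "0 < \<mu>" unfolding \<mu>_def A'_def using L j by simp
      have A's: "A' \<in> sets lborel" unfolding A'_def using A_sets by auto
      have A'sub: "A' \<subseteq> {0..1}" unfolding A'_def using A_sub01 by auto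
      have A'fin: "emeasure lborel A' < \<infinity>"
        using emeasure_mono[of A' "A m'" lborel] A_fin[of m'] A_sets unfolding A'_def by (auto simp: le_less_trans)
      have tpos: "0 < \<theta>^m'" using th1 by simp
      have F2: "(\<bar>\<beta> i\<bar> * \<theta>^m' - M) * \<mu> \<le> \<delta> i" for i
      proof -
        have ci: "set_integrable lborel A' (\<lambda>_. \<bar>\<beta> i\<bar> * \<theta>^m' - M)" using A's A'fin by (rule setint_const)
        have "(LINT x:A'|lborel. \<bar>\<beta> i\<bar> * \<theta>^m' - M) \<le> (LINT x:A'|lborel. \<bar>s i x - h x\<bar>)"
        proof (rule set_integral_mono_AE[OF ci subI[OF A's A'sub]])
          show "AE x\<in>A' in lborel. \<bar>\<beta> i\<bar> * \<theta>^m' - M \<le> \<bar>s i x - h x\<bar>"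
            using sAE[OF m'1 m'r, of i] M
          proof eventually_elim
            case (elim x)
            show ?case
            proof
              assume "x \<in> A'"
              then have "s i x = \<beta> i * \<theta>^m'" "\<bar>h x\<bar> \<le> M" using elim unfolding A'_def by auto
              then show "\<bar>\<beta> i\<bar> * \<theta>^m' - M \<le> \<bar>s i x - h x\<bar>" using th1 by (simp add: abs_mult)
            qed
          qed
        qed
        also have "\<dots> \<le> \<delta> i" by (rule dle[OF A's A'sub])
        moreover have "(LINT x:A'|lborel. \<bar>\<beta> i\<bar> * \<theta>^m' - M) = \<mu> *\<^sub>R (\<bar>\<beta> i\<bar> * \<theta>^m' - M)"
          unfolding \<mu>_def by (rule set_integral_const[OF A's]) (use A'fin in simp)
        ultimately show ?thesis by (simp add: mult.commute)
      qed
      define Y where "Y i = \<delta> i + ((\<delta> i + M * \<mu>) / (\<theta>^m' * \<mu>)) * \<theta>^m" for i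
      have XY: "X \<le> Y i" for i
      proof -
        have "\<bar>\<beta> i\<bar> * (\<theta>^m' * \<mu>) \<le> \<delta> i + M * \<mu>" using F2[of i] by (simp add: algebra_simps)
        then have "\<bar>\<beta> i\<bar> \<le> (\<delta> i + M * \<mu>) / (\<theta>^m' * \<mu>)" using tpos \<mu>pos by (simp add: pos_le_divide_eq)
        then have "\<bar>\<beta> i\<bar> * \<theta>^m \<le> ((\<delta> i + M * \<mu>) / (\<theta>^m' * \<mu>)) * \<theta>^m" using th1 by (intro mult_right_mono) auto
        then show ?thesis using F1[of i] unfolding Y_def by simp
      qed
      have "Y \<longlonglongrightarrow> 0 + ((0 + M * \<mu>) / (\<theta>^m' * \<mu>)) * \<theta>^m"
        unfolding Y_def[abs_def] using tpos \<mu>pos th1 by (intro tendsto_intros lim\<delta>) auto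
      moreover have "0 + ((0 + M * \<mu>) / (\<theta>^m' * \<mu>)) * \<theta>^m = \<theta>^m * M / \<theta>^m'" using \<mu>pos by simp
      ultimately have "Y \<longlonglongrightarrow> \<theta>^m * M / \<theta>^m'" by simp
      then show ?thesis unfolding m'_def[symmetric] using XY by (intro LIMSEQ_le_const) auto
    qed
    have "(\<lambda>j. \<theta>^m * M * ((\<lambda>j. (1/\<theta>)^j) \<circ> n k) j) \<longlonglongrightarrow> \<theta>^m * M * 0"
      using th1 by (intro tendsto_intros LIMSEQ_subseq_LIMSEQ[OF _ nmono] LIMSEQ_power_zero) auto
    then have Z: "(\<lambda>j. \<theta>^m * M / \<theta>^(n k j)) \<longlonglongrightarrow> 0" by (simp add: power_one_over divide_inverse power_inverse)
    have "X \<le> 0" using F3 by (intro LIMSEQ_le_const[OF Z]) auto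
    then show ?thesis using X0 unfolding X_def by simp
  qed
qed

end



context cdata
begin

lemma part5:
  assumes h: "h \<in> L1closure (fspan g)"
  shows "L1zero h \<or> h \<in> Gset"
proof (cases "h \<in> Gset")
  case True then show ?thesis by simp
next
  case False
  obtain s where s: "\<And>i. s i \<in> fspan g" "\<And>i. s i \<in> L1" and lim: "(\<lambda>i. L1dist (s i) h) \<longlonglongrightarrow> 0"
    and hL: "h \<in> L1"
    using h unfolding L1closure_def by blast
  obtain a b where ab: "0 \<le> a" "a < b" "b \<le> 1" and eb: "ess_bounded_on h a b"
    using False hL unfolding Gset_def by blast
  obtain M where M: "AE x in lborel. x \<in> {a..b} \<longrightarrow> \<bar>h x\<bar> \<le> M"
    using eb unfolding ess_bounded_on_def by blast
  have "\<forall>i. \<exists>N c. s i = (\<lambda>x. \<Sum>k<N. c k * g k x)" using s(1) unfolding fspan_def by blast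
  then obtain NN cc where sNc: "\<forall>i. s i = (\<lambda>x. \<Sum>k<NN i. cc i k * g k x)" unfolding choice_iff by blast
  have lev: "AE x in lborel. x \<in> A m \<longrightarrow> h x = 0" if m1: "1 \<le> m" for m
    using hL zero_level[OF hL _ lim ab M m1] sNc by (intro zero_on_A) auto
  have "AE x in lborel. \<forall>m. 1 \<le> m \<longrightarrow> x \<in> A m \<longrightarrow> h x = 0"
    using lev by (subst AE_all_countable) auto
  moreover have "AE x in lborel. x \<notin> (\<Inter>l. T l)" using T_Inter_null by (rule AE_not_in)
  ultimately have "AE x in lborel. x \<in> {0..1} \<longrightarrow> h x = 0"
  proof eventually_elim
    case (elim x)
    show ?case
    proof
      assume x01: "x \<in> {0..1}"
      obtain l where "x \<notin> T l" using elim(2) by blast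
      then obtain m where "1 \<le> m" "x \<in> A m" using cover[OF x01, of l] by blast
      then show "h x = 0" using elim(1) by blast
    qed
  qed
  then show ?thesis unfolding L1zero_def by simp
qed

lemma main:
  shows "(\<forall>k. g k \<in> L1)
    \<and> (\<forall>h1\<in>L1closure (fspan g). \<forall>h2\<in>L1closure (fspan g). \<forall>c::real.
          (\<lambda>x. h1 x + c * h2 x) \<in> L1closure (fspan g))
    \<and> (\<forall>h s. h \<in> L1 \<and> (\<forall>i. s i \<in> L1closure (fspan g)) \<and> (\<lambda>i. L1dist (s i) h) \<longlonglongrightarrow> 0
          \<longrightarrow> h \<in> L1closure (fspan g))
    \<and> (\<forall>N c. L1zero (\<lambda>x. \<Sum>k<N. c k * g k x) \<longrightarrow> (\<forall>k<N. c k = 0))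
    \<and> (\<forall>h\<in>L1closure (fspan g). L1zero h \<or> h \<in> Gset)"
  using g_L1 closure_lin closure_closed lin_indep part5 by blast

end

theorem mainTheorem1:
  fixes \<theta> :: real and A1 :: "real set" and n :: "nat \<Rightarrow> nat \<Rightarrow> nat"
  assumes "1 < \<theta>" "\<theta> < 2"
    and "cantor_set A1 0 1" "measure lborel A1 = 1 / 2"
    and "\<And>k. strict_mono (n k)"
    and "\<And>k j. 1 \<le> n k j"
    and "\<And>k k'. k \<noteq> k' \<Longrightarrow> range (n k) \<inter> range (n k') = {}"
  defines "g \<equiv> (\<lambda>k. gfun \<theta> A1 (n k))"
  shows "(\<forall>k. g k \<in> L1)
    \<and> (\<forall>h1\<in>L1closure (fspan g). \<forall>h2\<in>L1closure (fspan g). \<forall>c::real.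
          (\<lambda>x. h1 x + c * h2 x) \<in> L1closure (fspan g))
    \<and> (\<forall>h s. h \<in> L1 \<and> (\<forall>i. s i \<in> L1closure (fspan g)) \<and> (\<lambda>i. L1dist (s i) h) \<longlonglongrightarrow> 0
          \<longrightarrow> h \<in> L1closure (fspan g))
    \<and> (\<forall>N c. L1zero (\<lambda>x. \<Sum>k<N. c k * g k x) \<longrightarrow> (\<forall>k<N. c k = 0))
    \<and> (\<forall>h\<in>L1closure (fspan g). L1zero h \<or> h \<in> Gset)"
proof -
  have cd: "cdata A1 \<theta> n"
    using assms(1-7) unfolding cdata_def cdata_axioms_def cset_def by blast
  have geq: "g = cdata.g A1 \<theta> n"
    unfolding g_def by (rule ext) (simp add: cdata.g_def[OF cd])
  show ?thesis unfolding geq by (rule cdata.main[OF cd])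
qed



end
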